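(* Let $p\ge1$, $q\ge 2$, and let $A_1,\dots,A_q\in\mathbb{R}^{p\times p}$ be symmetric matrices such that, with $A_\eta=\sum_{i=1}^q\eta_iA_i$, one has $A_\eta^3=|\eta|^2A_\eta$ for all $\eta\in\mathbb{R}^q$. Then: (i) there are nonnegative integers $\nu,\mu$ with $2\nu+\mu=p$ such that for every $\eta\in\mathbb{R}^q\setminus\{0\}$ and every $i\in\{1,\dots,q\}$, the matrices $\frac{1}{|\eta|}A_\eta$ and $A_i$ have eigenvalues $1$ and $-1$ each of multiplicity $\nu$ and eigenvalue $0$ of multiplicity $\mu$; (ii) $\operatorname{trace}A_i=0$ for all $i$; (iii) $A_i^3=A_i$ for all $i$; (iv) for any $s,t\in\mathbb{R}^q$ with $\langle s,t\rangle=0$, $A_s^2A_t+A_sA_tA_s+A_tA_s^2=|s|^2A_t$.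
   Context: $|\cdot|$ and $\langle\cdot,\cdot\rangle$ denote the standard Euclidean norm and inner product on $\mathbb{R}^q$. *)

theory Defs
  imports "Jordan_Normal_Form.Char_Poly" "HOL-Computational_Algebra.Polynomial"
begin

text \<open>Indices 1..q of the paper are rendered as 0..<q; vectors eta in R^q as functions
  nat => real (only the values at 0..<q matter).\<close>

definition Aeta :: "nat \<Rightarrow> nat \<Rightarrow> (nat \<Rightarrow> real mat) \<Rightarrow> (nat \<Rightarrow> real) \<Rightarrow> real mat" where
  "Aeta p q A \<eta> = mat p p (\<lambda>(j,k). \<Sum>i<q. \<eta> i * A i $$ (j,k))"

definition sqnorm :: "nat \<Rightarrow> (nat \<Rightarrow> real) \<Rightarrow> real" where
  "sqnorm q \<eta> = (\<Sum>i<q. (\<eta> i)^2)"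

definition inner_q :: "nat \<Rightarrow> (nat \<Rightarrow> real) \<Rightarrow> (nat \<Rightarrow> real) \<Rightarrow> real" where
  "inner_q q s t = (\<Sum>i<q. s i * t i)"

definition eig_mult :: "real mat \<Rightarrow> real \<Rightarrow> nat" where
  "eig_mult M c = order c (char_poly M)"

definition mat_trace :: "real mat \<Rightarrow> real" where
  "mat_trace M = (\<Sum>i<dim_row M. M $$ (i,i))"

end

theory Submission
  imports Defs "Jordan_Normal_Form.Schur_Decomposition"
begin

lemma map_poly_prod_lin:
  "map_poly complex_of_real (\<Prod>e\<leftarrow>es. [:-e,1:]) = (\<Prod>e\<leftarrow>es. [:-complex_of_real e,1:])"
  proof (induction es)
  case (Cons a es)
  interpret h: map_poly_comm_ring_hom "complex_of_real" ..
  have "map_poly complex_of_real ([:-a,1:] * (\<Prod>e\<leftarrow>es. [:-e,1:])) = map_poly complex_of_real [:-a,1:] * map_poly complex_of_real (\<Prod>e\<leftarrow>es. [:-e,1:])"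
    by (rule h.hom_mult)
  then show ?case using Cons by simp
qed simp

lemma cube_roots:
  fixes M :: "real mat"
  assumes M: "M \<in> carrier_mat n n" and c: "M * M * M = M"
  shows "\<exists>es. char_poly M = (\<Prod>e\<leftarrow>es. [:-e,1:]) \<and> length es = n \<and> set es \<subseteq> {-1,0,1}"
proof -
  define Mc where "Mc = map_mat complex_of_real M"
  have Mc: "Mc \<in> carrier_mat n n" using M by (simp add: Mc_def)
  have cc: "Mc * Mc * Mc = Mc"
    using c M unfolding Mc_def
    by (metis mult_carrier_mat of_real_hom.mat_hom_mult)
  have cpc: "char_poly Mc = map_poly of_real (char_poly M)"
    unfolding Mc_def by (rule of_real_hom.char_poly_hom[OF M])
  obtain as where as: "char_poly Mc = (\<Prod>a\<leftarrow>as. [:-a,1:])" "length as = n"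
    using char_poly_factorized[OF Mc] by blast
  have roots: "a \<in> {-1,0,1}" if a: "a \<in> set as" for a
  proof -
    have "poly (char_poly Mc) a = 0" unfolding as(1) using a
      by (simp add: poly_prod_list prod_list_zero_iff)
    hence "eigenvalue Mc a" using eigenvalue_root_char_poly[OF Mc] by simp
    then obtain v where v: "v \<in> carrier_vec n" "v \<noteq> 0\<^sub>v n" "Mc *\<^sub>v v = a \<cdot>\<^sub>v v"
      unfolding eigenvalue_def eigenvector_def using Mc by auto
    have "Mc *\<^sub>v v = Mc * Mc * Mc *\<^sub>v v" using cc by simp
    also have "\<dots> = Mc *\<^sub>v (Mc *\<^sub>v (Mc *\<^sub>v v))"
      using Mc v(1) by (metis assoc_mult_mat_vec mult_carrier_mat mult_mat_vec_carrier)
    also have "\<dots> = (a^3) \<cdot>\<^sub>v v" using v Mc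
      by (simp add: mult_mat_vec power3_eq_cube smult_smult_assoc)
    finally have "a \<cdot>\<^sub>v v = (a^3) \<cdot>\<^sub>v v" using v by simp
    moreover obtain i where i: "i < n" "v $ i \<noteq> 0" using v(1,2) by force
    ultimately have "a * v $ i = a^3 * v $ i"
      by (metis index_smult_vec(1) v(1) carrier_vecD)
    hence "a = a^3" using i by simp
    hence "a * (a - 1) * (a + 1) = 0" by (simp add: algebra_simps power3_eq_cube)
    thus ?thesis by (auto simp: eq_neg_iff_add_eq_0)
  qed
  define es where "es = map Re as"
  have asr: "as = map complex_of_real es" unfolding es_def map_map
    by (rule sym, rule map_idI) (use roots in force)
  have "map_poly complex_of_real (char_poly M) = map_poly complex_of_real (\<Prod>e\<leftarrow>es. [:-e,1:])"
    using cpc as(1) unfolding map_poly_prod_lin asr by (simp add: o_def)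
  hence "char_poly M = (\<Prod>e\<leftarrow>es. [:-e,1:])"
    by (metis (no_types) coeff_map_poly of_real_0 of_real_eq_iff poly_eqI)
  moreover have "set es \<subseteq> {-1,0,1}" using roots unfolding es_def by force
  moreover have "length es = n" using as(2) unfolding es_def by simp
  ultimately show ?thesis by blast
qed

lemma trace_comm:
  assumes A: "A \<in> carrier_mat n m" and B: "B \<in> carrier_mat m n"
  shows "mat_trace (A * B) = mat_trace (B * A)"
proof -
  have "mat_trace (A * B) = (\<Sum>i<n. \<Sum>k<m. A $$ (i,k) * B $$ (k,i))"
    unfolding mat_trace_def using A B
    by (auto simp: scalar_prod_def atLeast0LessThan intro!: sum.cong)
  also have "\<dots> = (\<Sum>k<m. \<Sum>i<n. B $$ (k,i) * A $$ (i,k))"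
    by (subst sum.swap) (simp add: mult.commute)
  also have "\<dots> = mat_trace (B * A)"
    unfolding mat_trace_def using A B
    by (auto simp: scalar_prod_def atLeast0LessThan intro!: sum.cong)
  finally show ?thesis .
qed

lemma trace_es:
  fixes M :: "real mat"
  assumes M: "M \<in> carrier_mat n n" and c: "char_poly M = (\<Prod>e\<leftarrow>es. [:-e,1:])"
  shows "mat_trace M = sum_list es \<and> mat_trace (M * M) = sum_list (map (\<lambda>x. x^2) es)"
proof -
  obtain B P Q where sd: "schur_decomposition M es = (B,P,Q)" by (cases "schur_decomposition M es") auto
  from schur_decomposition[OF M c sd] have sim: "similar_mat_wit M B P Q" and ut: "upper_triangular B"
    and dg: "diag_mat B = es" by auto
  from sim M have BPQ: "B \<in> carrier_mat n n" "P \<in> carrier_mat n n" "Q \<in> carrier_mat n n"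
    and PQ: "P * Q = 1\<^sub>m n" and QP: "Q * P = 1\<^sub>m n" and MPBQ: "M = P * B * Q"
    unfolding similar_mat_wit_def Let_def by auto
  have tr_sim: "mat_trace (P * X * Q) = mat_trace X" if X: "X \<in> carrier_mat n n" for X
  proof -
    have "mat_trace (P * X * Q) = mat_trace (P * (X * Q))" using BPQ X by (simp add: assoc_mult_mat[of _ n n])
    also have "\<dots> = mat_trace (X * Q * P)" using BPQ X by (intro trace_comm[of _ n n]) auto
    also have "\<dots> = mat_trace (X * (Q * P))" using BPQ X by (simp add: assoc_mult_mat[of _ n n])
    also have "\<dots> = mat_trace X" using QP X by simp
    finally show ?thesis .
  qed
  have QPX: "Q * (P * X) = X" if X: "X \<in> carrier_mat n n" for X
    using BPQ X QP by (simp add: assoc_mult_mat[of _ n n, symmetric])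
  have MM: "M * M = P * (B * B) * Q"
  proof -
    have e1: "P * B * Q = P * (B * Q)" by (rule assoc_mult_mat) (use BPQ in auto)
    have "M * M = P * (B * Q) * (P * (B * Q))" using MPBQ e1 by simp
    also have "\<dots> = P * ((B * Q) * (P * (B * Q)))" by (rule assoc_mult_mat) (use BPQ in auto)
    also have "(B * Q) * (P * (B * Q)) = B * (Q * (P * (B * Q)))" by (rule assoc_mult_mat) (use BPQ in auto)
    also have "Q * (P * (B * Q)) = B * Q" by (rule QPX) (use BPQ in auto)
    also have "B * (B * Q) = B * B * Q" by (rule assoc_mult_mat[symmetric]) (use BPQ in auto)
    also have "P * (B * B * Q) = P * (B * B) * Q" by (rule assoc_mult_mat[symmetric]) (use BPQ in auto)
    finally show ?thesis .
  qed
  have len: "length es = n" using dg BPQ by (auto simp: diag_mat_def)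
  have sumes: "(\<Sum>i<n. f (B $$ (i,i))) = sum_list (map f es)" for f :: "real \<Rightarrow> real"
    unfolding dg[symmetric] diag_mat_def using BPQ
    by (simp add: sum_set_upt_conv_sum_list_nat[symmetric] atLeast0LessThan o_def)
  have diagBB: "(B * B) $$ (i,i) = (B $$ (i,i))^2" if i: "i < n" for i
  proof -
    have "(B * B) $$ (i,i) = (\<Sum>k\<in>{0..<n}. B $$ (i,k) * B $$ (k,i))"
      using BPQ i by (simp add: scalar_prod_def)
    also have "\<dots> = B $$ (i,i) * B $$ (i,i) + (\<Sum>k\<in>{0..<n} - {i}. B $$ (i,k) * B $$ (k,i))"
      using i by (subst sum.remove[of _ i]) auto
    also have "(\<Sum>k\<in>{0..<n} - {i}. B $$ (i,k) * B $$ (k,i)) = 0"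
    proof (rule sum.neutral, intro ballI)
      fix k assume k: "k \<in> {0..<n} - {i}"
      show "B $$ (i,k) * B $$ (k,i) = 0"
      proof (cases "k < i")
        case True then show ?thesis using ut i BPQ unfolding upper_triangular_def by auto
      next
        case False then have "i < k" using k by auto
        then show ?thesis using ut k BPQ unfolding upper_triangular_def by auto
      qed
    qed
    finally show ?thesis by (simp add: power2_eq_square)
  qed
  have "mat_trace M = mat_trace B" unfolding MPBQ by (rule tr_sim) (use BPQ in auto)
  also have "\<dots> = sum_list es" using sumes[of "\<lambda>x. x"] BPQ unfolding mat_trace_def by simp
  finally have t1: "mat_trace M = sum_list es" .
  have "mat_trace (M * M) = mat_trace (B * B)" unfolding MM by (rule tr_sim) (use BPQ in auto)
  also have "\<dots> = (\<Sum>i<n. (B $$ (i,i))^2)" using BPQ diagBB unfolding mat_trace_def by simp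
  also have "\<dots> = sum_list (map (\<lambda>x. x^2) es)" by (rule sumes)
  finally show ?thesis using t1 by simp
qed

lemma order_lin_prod:
  fixes a :: real
  shows "Polynomial.order a (\<Prod>e\<leftarrow>es. [:-e,1:]) = count_list es a"
proof (induction es)
  case Nil then show ?case by simp
next
  case (Cons e es)
  have nz: "(\<Prod>e\<leftarrow>es. [:-e,1:]) \<noteq> (0::real poly)"
    by auto
  have "Polynomial.order a ([:-e,1:] * (\<Prod>e\<leftarrow>es. [:-e,1:])) = Polynomial.order a [:-e,1:] + Polynomial.order a (\<Prod>e\<leftarrow>es. [:-e,1:])"
  proof (rule order_mult)
    show "[:-e,1:] * (\<Prod>e\<leftarrow>es. [:-e,1:]) \<noteq> 0" using nz by (simp only: mult_eq_0_iff) simp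
  qed
  moreover have "Polynomial.order a [:-e,1:] = (if a = e then 1 else 0)"
  proof (cases "a = e")
    case True then show ?thesis using order_power_n_n[of a 1] by simp
  next
    case False then have h: "poly [:-e,1:] a \<noteq> 0" by simp
    from order_0I[OF h] False show ?thesis by simp
  qed
  ultimately show ?case using Cons by simp
qed

lemma counts:
  fixes es :: "real list"
  assumes "set es \<subseteq> {-1,0,1}"
  shows "sum_list es = real (count_list es 1) - real (count_list es (-1))
    \<and> sum_list (map (\<lambda>x. x^2) es) = real (count_list es 1) + real (count_list es (-1))
    \<and> length es = count_list es 1 + count_list es (-1) + count_list es 0"
  using assms by (induction es) auto


lemma triple:
  fixes X Y Z :: "real mat"
  assumes "X \<in> carrier_mat p p" "Y \<in> carrier_mat p p" "Z \<in> carrier_mat p p" "j < p" "k < p"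
  shows "(X * Y * Z) $$ (j,k) = (\<Sum>l<p. \<Sum>m<p. X $$ (j,l) * Y $$ (l,m) * Z $$ (m,k))"
  using assms by (simp add: scalar_prod_def atLeast0LessThan sum_distrib_left mult.assoc)

lemma pow3: "X \<in> carrier_mat p p \<Longrightarrow> X ^\<^sub>m 3 = X * X * X"
  by (simp add: numeral_3_eq_3)

lemma cube_mult:
  fixes M :: "real mat"
  assumes M: "M \<in> carrier_mat n n" and c: "M * M * M = M"
  shows "\<exists>a b c. eig_mult M 1 = a \<and> eig_mult M (-1) = b \<and> eig_mult M 0 = c \<and> a + b + c = n
     \<and> mat_trace M = real a - real b \<and> mat_trace (M * M) = real a + real b"
proof -
  obtain es where es: "char_poly M = (\<Prod>e\<leftarrow>es. [:-e,1:])" "length es = n" "set es \<subseteq> {-1,0,1}"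
    using cube_roots[OF M c] by blast
  have "\<And>x. eig_mult M x = count_list es x" unfolding eig_mult_def es(1) by (rule order_lin_prod)
  with trace_es[OF M es(1)] counts[OF es(3)] es(2) show ?thesis by auto
qed

lemma Aeta_carrier[simp]: "Aeta p q A \<eta> \<in> carrier_mat p p"
  by (simp add: Aeta_def)

lemma Aeta_dims[simp]: "dim_row (Aeta p q A \<eta>) = p" "dim_col (Aeta p q A \<eta>) = p"
  by (simp_all add: Aeta_def)

lemma Aeta_index: "j < p \<Longrightarrow> k < p \<Longrightarrow> Aeta p q A \<eta> $$ (j,k) = (\<Sum>i<q. \<eta> i * A i $$ (j,k))"
  by (simp add: Aeta_def)

lemma scaled_cube:
  fixes X :: "real mat"
  assumes X: "X \<in> carrier_mat p p" and cu: "X * X * X = N \<cdot>\<^sub>m X" and N: "N > 0"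
  shows "((1 / sqrt N) \<cdot>\<^sub>m X) * ((1 / sqrt N) \<cdot>\<^sub>m X) * ((1 / sqrt N) \<cdot>\<^sub>m X) = (1 / sqrt N) \<cdot>\<^sub>m X"
proof (rule eq_matI)
  fix j k assume jk: "j < dim_row ((1 / sqrt N) \<cdot>\<^sub>m X)" "k < dim_col ((1 / sqrt N) \<cdot>\<^sub>m X)"
  hence j: "j < p" and k: "k < p" using X by auto
  let ?c = "1 / sqrt N"
  have "(?c \<cdot>\<^sub>m X * (?c \<cdot>\<^sub>m X) * (?c \<cdot>\<^sub>m X)) $$ (j,k)
      = (\<Sum>l<p. \<Sum>m<p. ?c * X $$ (j,l) * (?c * X $$ (l,m)) * (?c * X $$ (m,k)))"
    using X j k by (subst triple[of _ p]) auto
  also have "\<dots> = ?c^3 * (\<Sum>l<p. \<Sum>m<p. X $$ (j,l) * X $$ (l,m) * X $$ (m,k))"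
    by (simp add: sum_distrib_left power3_eq_cube algebra_simps)
  also have "(\<Sum>l<p. \<Sum>m<p. X $$ (j,l) * X $$ (l,m) * X $$ (m,k)) = N * X $$ (j,k)"
    using triple[OF X X X j k, symmetric] cu j k X by simp
  also have "?c^3 * (N * X $$ (j,k)) = ?c * X $$ (j,k)"
  proof -
    have "sqrt N ^ 2 = N" using N by simp
    hence "?c^3 * N = ?c" using N by (simp add: power3_eq_cube power2_eq_square field_simps)
    thus ?thesis by (metis mult.assoc)
  qed
  finally show "(?c \<cdot>\<^sub>m X * (?c \<cdot>\<^sub>m X) * (?c \<cdot>\<^sub>m X)) $$ (j,k) = (?c \<cdot>\<^sub>m X) $$ (j,k)"
    using j k X by simp
qed (use X in auto)

lemma trace_smult: "X \<in> carrier_mat p p \<Longrightarrow> mat_trace (c \<cdot>\<^sub>m X) = c * mat_trace X"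
  by (simp add: mat_trace_def sum_distrib_left)

lemma trace_smult2: "X \<in> carrier_mat p p \<Longrightarrow> mat_trace ((c \<cdot>\<^sub>m X) * (c \<cdot>\<^sub>m X)) = c^2 * mat_trace (X * X)"
proof -
  assume X: "X \<in> carrier_mat p p"
  have "(c \<cdot>\<^sub>m X) * (c \<cdot>\<^sub>m X) = c \<cdot>\<^sub>m (c \<cdot>\<^sub>m (X * X))"
    using X by (simp add: mult_smult_assoc_mat[of _ p p] mult_smult_distrib[of _ p p])
  moreover have "mat_trace (c \<cdot>\<^sub>m (c \<cdot>\<^sub>m (X * X))) = c * (c * mat_trace (X * X))"
    using X by (simp add: trace_smult[of _ p])
  ultimately show ?thesis by (simp add: power2_eq_square)
qed


lemma const_finite:
  fixes g :: "real \<Rightarrow> real"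
  assumes cont: "continuous_on UNIV g" and F: "finite F" and gF: "\<And>x. g x \<in> F"
  shows "g x = g y"
proof -
  have main: "g a = g b" if ab: "a \<le> b" for a b
  proof (rule ccontr)
    assume ne: "g a \<noteq> g b"
    have contab: "continuous_on {a..b} g" using cont by (rule continuous_on_subset) simp
    let ?lo = "min (g a) (g b)" and ?hi = "max (g a) (g b)"
    have "{?lo<..<?hi} \<subseteq> F"
    proof
      fix v assume v: "v \<in> {?lo<..<?hi}"
      have "\<exists>t\<ge>a. t \<le> b \<and> g t = v"
      proof (cases "g a \<le> g b")
        case True then show ?thesis using IVT'[of g a v b] v ab contab by auto
      next
        case False then show ?thesis using IVT2'[of g b v a] v ab contab by auto
      qed
      then show "v \<in> F" using gF by auto
    qed
    moreover have "infinite {?lo<..<?hi}" using ne by (intro infinite_Ioo) (auto simp: min_def max_def)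
    ultimately show False using F finite_subset by blast
  qed
  show ?thesis by (metis main linorder_le_cases)
qed

definition T1 :: "nat \<Rightarrow> nat \<Rightarrow> (nat \<Rightarrow> real mat) \<Rightarrow> (nat \<Rightarrow> real) \<Rightarrow> real" where
  "T1 p q A \<eta> = mat_trace (Aeta p q A \<eta>) / sqrt (sqnorm q \<eta>)"

definition T2 :: "nat \<Rightarrow> nat \<Rightarrow> (nat \<Rightarrow> real mat) \<Rightarrow> (nat \<Rightarrow> real) \<Rightarrow> real" where
  "T2 p q A \<eta> = mat_trace (Aeta p q A \<eta> * Aeta p q A \<eta>) / sqnorm q \<eta>"

lemma sqnorm_pos: "\<exists>i<q. \<eta> i \<noteq> 0 \<Longrightarrow> sqnorm q \<eta> > 0"
proof -
  assume "\<exists>i<q. \<eta> i \<noteq> 0"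
  then obtain i where i: "i < q" "\<eta> i \<noteq> 0" by blast
  have "(\<eta> i)^2 \<le> sqnorm q \<eta>" unfolding sqnorm_def
    by (rule member_le_sum) (use i in auto)
  moreover have "(\<eta> i)^2 > 0" using i by simp
  ultimately show ?thesis by linarith
qed

lemma tr1_formula: "mat_trace (Aeta p q A \<eta>) = (\<Sum>j<p. \<Sum>i<q. \<eta> i * A i $$ (j,j))"
  unfolding mat_trace_def by (simp add: Aeta_def)

lemma tr2_formula: "mat_trace (Aeta p q A \<eta> * Aeta p q A \<eta>) =
   (\<Sum>j<p. \<Sum>k<p. (\<Sum>i<q. \<eta> i * A i $$ (j,k)) * (\<Sum>i<q. \<eta> i * A i $$ (k,j)))"
  unfolding mat_trace_def by (simp add: Aeta_def scalar_prod_def atLeast0LessThan)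

lemma T_cont:
  assumes nz: "\<And>x. \<exists>i<q. \<eta>0 i + x * \<eta>1 i \<noteq> 0"
  shows "continuous_on UNIV (\<lambda>x. T1 p q A (\<lambda>i. \<eta>0 i + x * \<eta>1 i))"
    and "continuous_on UNIV (\<lambda>x. T2 p q A (\<lambda>i. \<eta>0 i + x * \<eta>1 i))"
proof -
  have pos: "sqnorm q (\<lambda>i. \<eta>0 i + x * \<eta>1 i) > 0" for x using sqnorm_pos[OF nz] .
  have pos': "sqnorm q (\<lambda>i. \<eta>0 i + x * \<eta>1 i) \<noteq> 0" for x using pos[of x] by linarith
  have cs: "continuous_on UNIV (\<lambda>x. sqnorm q (\<lambda>i. \<eta>0 i + x * \<eta>1 i))"
    unfolding sqnorm_def by (intro continuous_intros)
  show "continuous_on UNIV (\<lambda>x. T1 p q A (\<lambda>i. \<eta>0 i + x * \<eta>1 i))"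
    unfolding T1_def tr1_formula
    by (intro continuous_intros cs) (simp_all add: pos')
  show "continuous_on UNIV (\<lambda>x. T2 p q A (\<lambda>i. \<eta>0 i + x * \<eta>1 i))"
    unfolding T2_def tr2_formula
    by (intro continuous_intros cs) (simp_all add: pos')
qed

lemma info:
  assumes cube: "\<And>\<eta>. Aeta p q A \<eta> ^\<^sub>m 3 = sqnorm q \<eta> \<cdot>\<^sub>m Aeta p q A \<eta>"
    and nz: "\<exists>i<q. \<eta> i \<noteq> 0"
  shows "\<exists>a b c. eig_mult ((1 / sqrt (sqnorm q \<eta>)) \<cdot>\<^sub>m Aeta p q A \<eta>) 1 = a
    \<and> eig_mult ((1 / sqrt (sqnorm q \<eta>)) \<cdot>\<^sub>m Aeta p q A \<eta>) (-1) = b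
    \<and> eig_mult ((1 / sqrt (sqnorm q \<eta>)) \<cdot>\<^sub>m Aeta p q A \<eta>) 0 = c
    \<and> a + b + c = p \<and> T1 p q A \<eta> = real a - real b \<and> T2 p q A \<eta> = real a + real b"
proof -
  let ?N = "sqnorm q \<eta>" and ?X = "Aeta p q A \<eta>"
  let ?M = "(1 / sqrt ?N) \<cdot>\<^sub>m ?X"
  have N: "?N > 0" using sqnorm_pos[OF nz] .
  have X: "?X \<in> carrier_mat p p" by simp
  have "?X * ?X * ?X = ?N \<cdot>\<^sub>m ?X" using cube[of \<eta>] pow3[OF X] by simp
  from scaled_cube[OF X this N] have MM: "?M * ?M * ?M = ?M" .
  have M: "?M \<in> carrier_mat p p" by simp
  obtain a b c where abc: "eig_mult ?M 1 = a" "eig_mult ?M (-1) = b" "eig_mult ?M 0 = c" "a + b + c = p"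
     "mat_trace ?M = real a - real b" "mat_trace (?M * ?M) = real a + real b"
    using cube_mult[OF M MM] by blast
  have "T1 p q A \<eta> = mat_trace ?M" unfolding T1_def using trace_smult[OF X] by simp
  moreover have "T2 p q A \<eta> = mat_trace (?M * ?M)" unfolding T2_def using trace_smult2[OF X] N
    by (simp add: power_divide)
  ultimately show ?thesis using abc by auto
qed


lemma line_eq:
  assumes cube: "\<And>\<eta>. Aeta p q A \<eta> ^\<^sub>m 3 = sqnorm q \<eta> \<cdot>\<^sub>m Aeta p q A \<eta>"
    and nz: "\<And>x. \<exists>i<q. \<eta>0 i + x * \<eta>1 i \<noteq> 0"
  shows "T1 p q A \<eta>0 = T1 p q A (\<lambda>i. \<eta>0 i + \<eta>1 i) \<and> T2 p q A \<eta>0 = T2 p q A (\<lambda>i. \<eta>0 i + \<eta>1 i)"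
proof -
  let ?F1 = "(\<lambda>(a,b). real a - real b) ` ({..p} \<times> {..p})"
  let ?F2 = "real ` {..p}"
  have inF: "T1 p q A (\<lambda>i. \<eta>0 i + x * \<eta>1 i) \<in> ?F1 \<and> T2 p q A (\<lambda>i. \<eta>0 i + x * \<eta>1 i) \<in> ?F2" for x
  proof -
    obtain a b c where "a + b + c = p" "T1 p q A (\<lambda>i. \<eta>0 i + x * \<eta>1 i) = real a - real b"
      "T2 p q A (\<lambda>i. \<eta>0 i + x * \<eta>1 i) = real a + real b"
      using info[OF cube nz[of x]] by blast
    then show ?thesis by (auto intro!: image_eqI[of _ _ "(a,b)"] image_eqI[of _ _ "a+b"])
  qed
  have e1: "T1 p q A (\<lambda>i. \<eta>0 i + 0 * \<eta>1 i) = T1 p q A (\<lambda>i. \<eta>0 i + 1 * \<eta>1 i)"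
    by (rule const_finite[OF T_cont(1)[OF nz], of ?F1]) (use inF in auto)
  have e2: "T2 p q A (\<lambda>i. \<eta>0 i + 0 * \<eta>1 i) = T2 p q A (\<lambda>i. \<eta>0 i + 1 * \<eta>1 i)"
    by (rule const_finite[OF T_cont(2)[OF nz], of ?F2]) (use inF in auto)
  from e1 e2 show ?thesis by simp
qed

lemma Aeta_cong: "(\<And>i. i < q \<Longrightarrow> \<eta> i = \<eta>' i) \<Longrightarrow> Aeta p q A \<eta> = Aeta p q A \<eta>'"
  unfolding Aeta_def by (intro cong_mat refl) (auto intro!: sum.cong)

lemma sqnorm_cong: "(\<And>i. i < q \<Longrightarrow> \<eta> i = \<eta>' i) \<Longrightarrow> sqnorm q \<eta> = sqnorm q \<eta>'"
  unfolding sqnorm_def by (auto intro!: sum.cong)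

lemma T_cong: "(\<And>i. i < q \<Longrightarrow> \<eta> i = \<eta>' i) \<Longrightarrow> T1 p q A \<eta> = T1 p q A \<eta>' \<and> T2 p q A \<eta> = T2 p q A \<eta>'"
  unfolding T1_def T2_def using Aeta_cong[of q \<eta> \<eta>' p A] sqnorm_cong[of q \<eta> \<eta>'] by simp

lemma Aeta_scale: "Aeta p q A (\<lambda>i. c * \<eta> i) = c \<cdot>\<^sub>m Aeta p q A \<eta>"
  by (rule eq_matI) (auto simp: Aeta_def sum_distrib_left mult.assoc)

lemma sqnorm_scale: "sqnorm q (\<lambda>i. c * \<eta> i) = c^2 * sqnorm q \<eta>"
  unfolding sqnorm_def by (simp add: sum_distrib_left power_mult_distrib)

lemma T_scale:
  shows "c \<noteq> 0 \<Longrightarrow> T2 p q A (\<lambda>i. c * \<eta> i) = T2 p q A \<eta>"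
    and "c > 0 \<Longrightarrow> T1 p q A (\<lambda>i. c * \<eta> i) = T1 p q A \<eta>"
    and "c < 0 \<Longrightarrow> T1 p q A (\<lambda>i. c * \<eta> i) = - T1 p q A \<eta>"
proof -
  have X: "Aeta p q A \<eta> \<in> carrier_mat p p" by simp
  show "c \<noteq> 0 \<Longrightarrow> T2 p q A (\<lambda>i. c * \<eta> i) = T2 p q A \<eta>"
    unfolding T2_def Aeta_scale sqnorm_scale trace_smult2[OF X] by simp
  have "T1 p q A (\<lambda>i. c * \<eta> i) = c / \<bar>c\<bar> * T1 p q A \<eta>"
    unfolding T1_def Aeta_scale sqnorm_scale trace_smult[OF X] by (simp add: real_sqrt_mult)
  then show "c > 0 \<Longrightarrow> T1 p q A (\<lambda>i. c * \<eta> i) = T1 p q A \<eta>"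
    and "c < 0 \<Longrightarrow> T1 p q A (\<lambda>i. c * \<eta> i) = - T1 p q A \<eta>" by auto
qed

definition dep :: "nat \<Rightarrow> (nat \<Rightarrow> real) \<Rightarrow> (nat \<Rightarrow> real) \<Rightarrow> bool" where
  "dep q \<eta> \<zeta> = (\<exists>c. \<forall>i<q. \<eta> i = c * \<zeta> i)"

lemma pair:
  assumes cube: "\<And>\<eta>. Aeta p q A \<eta> ^\<^sub>m 3 = sqnorm q \<eta> \<cdot>\<^sub>m Aeta p q A \<eta>"
    and S: "\<exists>i<q. \<eta> i \<noteq> 0" "\<exists>i<q. \<eta>' i \<noteq> 0" and nd: "\<not> dep q \<eta> \<eta>'"
  shows "T1 p q A \<eta> = T1 p q A \<eta>' \<and> T2 p q A \<eta> = T2 p q A \<eta>'"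
proof -
  have l1: "\<exists>i<q. \<eta> i + x * \<eta>' i \<noteq> 0" for x
  proof (rule ccontr)
    assume "\<not> ?thesis"
    hence "\<forall>i<q. \<eta> i = (-x) * \<eta>' i" by (auto simp: add_eq_0_iff)
    thus False using nd unfolding dep_def by blast
  qed
  have l2: "\<exists>i<q. \<eta>' i + x * \<eta> i \<noteq> 0" for x
  proof (rule ccontr)
    assume "\<not> ?thesis"
    hence h: "\<forall>i<q. \<eta>' i = (-x) * \<eta> i" by (auto simp: add_eq_0_iff)
    have "x \<noteq> 0" using h S(2) by auto
    hence "\<forall>i<q. \<eta> i = (-1/x) * \<eta>' i" using h by auto
    thus False using nd unfolding dep_def by blast
  qed
  have "(\<lambda>i. \<eta> i + \<eta>' i) = (\<lambda>i. \<eta>' i + \<eta> i)" by (simp add: add.commute)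
  thus ?thesis using line_eq[OF cube l1] line_eq[OF cube l2] by simp
qed

lemma T2_const:
  assumes cube: "\<And>\<eta>. Aeta p q A \<eta> ^\<^sub>m 3 = sqnorm q \<eta> \<cdot>\<^sub>m Aeta p q A \<eta>"
    and S: "\<exists>i<q. \<eta> i \<noteq> 0" "\<exists>i<q. \<eta>' i \<noteq> 0"
  shows "T2 p q A \<eta> = T2 p q A \<eta>'"
proof (cases "dep q \<eta> \<eta>'")
  case True
  then obtain c where c: "\<forall>i<q. \<eta> i = c * \<eta>' i" unfolding dep_def by blast
  have "c \<noteq> 0" using c S(1) by auto
  then have "T2 p q A \<eta> = T2 p q A (\<lambda>i. c * \<eta>' i)" using T_cong[of q \<eta> "\<lambda>i. c * \<eta>' i" p A] c by simp
  also have "\<dots> = T2 p q A \<eta>'" using T_scale(1) \<open>c \<noteq> 0\<close> by blast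
  finally show ?thesis .
next
  case False then show ?thesis using pair[OF cube S] by blast
qed

lemma T1_zero:
  assumes cube: "\<And>\<eta>. Aeta p q A \<eta> ^\<^sub>m 3 = sqnorm q \<eta> \<cdot>\<^sub>m Aeta p q A \<eta>"
    and q: "q \<ge> 2" and S: "\<exists>i<q. \<eta> i \<noteq> 0"
  shows "T1 p q A \<eta> = 0"
proof -
  define e :: "nat \<Rightarrow> nat \<Rightarrow> real" where "e k = (\<lambda>i. if i = k then 1 else 0)" for k
  have eS: "\<exists>i<q. e k i \<noteq> 0" if "k < q" for k using that by (auto simp: e_def)
  have "\<exists>\<zeta>. (\<exists>i<q. \<zeta> i \<noteq> 0) \<and> \<not> dep q \<eta> \<zeta>"
  proof (cases "dep q \<eta> (e 0)")
    case False then show ?thesis using eS[of 0] q by auto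
  next
    case True
    then obtain c where c: "\<forall>i<q. \<eta> i = c * e 0 i" unfolding dep_def by blast
    have "\<not> dep q \<eta> (e 1)"
    proof
      assume "dep q \<eta> (e 1)"
      then obtain d where d: "\<forall>i<q. \<eta> i = d * e 1 i" unfolding dep_def by blast
      have "\<forall>i<q. \<eta> i = 0"
      proof (intro allI impI)
        fix i assume "i < q"
        have "c = 0" using c[rule_format, of 0] d[rule_format, of 0] q by (simp add: e_def)
        then show "\<eta> i = 0" using c \<open>i < q\<close> by simp
      qed
      then show False using S by auto
    qed
    then show ?thesis using eS[of 1] q by auto
  qed
  then obtain \<zeta> where z: "\<exists>i<q. \<zeta> i \<noteq> 0" "\<not> dep q \<eta> \<zeta>" by blast
  have z2: "\<not> dep q (\<lambda>i. (-1) * \<eta> i) \<zeta>"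
  proof
    assume "dep q (\<lambda>i. (-1) * \<eta> i) \<zeta>"
    then obtain c where "\<forall>i<q. - \<eta> i = c * \<zeta> i" unfolding dep_def by auto
    then have "\<forall>i<q. \<eta> i = (-c) * \<zeta> i" by (metis minus_minus mult_minus_left)
    then show False using z(2) unfolding dep_def by blast
  qed
  have Sm: "\<exists>i<q. (-1) * \<eta> i \<noteq> 0" using S by auto
  have "T1 p q A \<eta> = T1 p q A \<zeta>" using pair[OF cube S z(1,2)] by blast
  also have "\<dots> = T1 p q A (\<lambda>i. (-1) * \<eta> i)" using pair[OF cube Sm z(1) z2] by simp
  also have "\<dots> = - T1 p q A \<eta>" by (rule T_scale(3)) simp
  finally show ?thesis by simp
qed


lemma poly3_coeff:
  fixes a0 a1 a2 a3 :: real
  assumes "\<And>x. a0 + a1 * x + a2 * x^2 + a3 * x^3 = 0"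
  shows "a1 = 0"
proof -
  have "a0 + a1 + a2 + a3 = 0" using assms[of 1] by simp
  moreover have "a0 - a1 + a2 - a3 = 0" using assms[of "-1"] by simp
  moreover have "a0 + 2*a1 + 4*a2 + 8*a3 = 0" using assms[of 2] by simp
  moreover have "a0 - 2*a1 + 4*a2 - 8*a3 = 0" using assms[of "-2"] by simp
  ultimately show ?thesis by linarith
qed

lemma polar:
  assumes cube: "\<And>\<eta>. Aeta p q A \<eta> ^\<^sub>m 3 = sqnorm q \<eta> \<cdot>\<^sub>m Aeta p q A \<eta>"
    and st: "inner_q q s t = 0"
  shows "Aeta p q A s ^\<^sub>m 2 * Aeta p q A t + Aeta p q A s * Aeta p q A t * Aeta p q A s
              + Aeta p q A t * Aeta p q A s ^\<^sub>m 2 = sqnorm q s \<cdot>\<^sub>m Aeta p q A t"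
proof -
  let ?X = "Aeta p q A s" and ?Y = "Aeta p q A t"
  have X: "?X \<in> carrier_mat p p" and Y: "?Y \<in> carrier_mat p p" by simp_all
  have sq: "?X ^\<^sub>m 2 = ?X * ?X" using X by (simp add: numeral_2_eq_2)
  show ?thesis
  proof (rule eq_matI)
    fix j k assume jk: "j < dim_row (sqnorm q s \<cdot>\<^sub>m ?Y)" "k < dim_col (sqnorm q s \<cdot>\<^sub>m ?Y)"
    hence j: "j < p" and k: "k < p" using Y by auto
    define x where "x = (\<lambda>a b. ?X $$ (a,b))"
    define y where "y = (\<lambda>a b. ?Y $$ (a,b))"
    define c0 where "c0 = (\<Sum>l<p. \<Sum>m<p. x j l * x l m * x m k)"
    define c1 where "c1 = (\<Sum>l<p. \<Sum>m<p. y j l * x l m * x m k + x j l * y l m * x m k + x j l * x l m * y m k)"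
    define c2 where "c2 = (\<Sum>l<p. \<Sum>m<p. y j l * y l m * x m k + y j l * x l m * y m k + x j l * y l m * y m k)"
    define c3 where "c3 = (\<Sum>l<p. \<Sum>m<p. y j l * y l m * y m k)"
    have key: "(c0 - sqnorm q s * x j k) + (c1 - sqnorm q s * y j k) * z
       + (c2 - sqnorm q t * x j k) * z^2 + (c3 - sqnorm q t * y j k) * z^3 = 0" for z
    proof -
      let ?e = "\<lambda>i. s i + z * t i"
      have ent: "Aeta p q A ?e $$ (a,b) = x a b + z * y a b" if "a < p" "b < p" for a b
        using that unfolding x_def y_def
        by (simp add: Aeta_index distrib_right sum.distrib sum_distrib_left mult.assoc)
      have nrm: "sqnorm q ?e = sqnorm q s + z^2 * sqnorm q t"
      proof -
        have "sqnorm q ?e = sqnorm q s + 2 * z * inner_q q s t + z^2 * sqnorm q t"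
          unfolding sqnorm_def inner_q_def
          by (simp add: power2_sum sum.distrib sum_distrib_left power_mult_distrib algebra_simps)
        thus ?thesis using st by simp
      qed
      have "(Aeta p q A ?e ^\<^sub>m 3) $$ (j,k) = (\<Sum>l<p. \<Sum>m<p. (x j l + z * y j l) * (x l m + z * y l m) * (x m k + z * y m k))"
        using j k by (subst pow3[of _ p], simp, subst triple[of _ p], simp_all add: ent)
      also have "\<dots> = c0 + c1 * z + c2 * z^2 + c3 * z^3"
        unfolding c0_def c1_def c2_def c3_def
        by (simp add: sum.distrib sum_distrib_left algebra_simps power2_eq_square power3_eq_cube)
      finally have l: "(Aeta p q A ?e ^\<^sub>m 3) $$ (j,k) = c0 + c1 * z + c2 * z^2 + c3 * z^3" .
      have r: "(sqnorm q ?e \<cdot>\<^sub>m Aeta p q A ?e) $$ (j,k) = (sqnorm q s + z^2 * sqnorm q t) * (x j k + z * y j k)"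
        using j k by (simp add: ent nrm)
      from l r cube[of ?e] have "c0 + c1 * z + c2 * z^2 + c3 * z^3 = (sqnorm q s + z^2 * sqnorm q t) * (x j k + z * y j k)"
        by simp
      then show ?thesis by (simp add: algebra_simps power2_eq_square power3_eq_cube)
    qed
    have c1: "c1 = sqnorm q s * y j k"
      using poly3_coeff[of "c0 - sqnorm q s * x j k" "c1 - sqnorm q s * y j k"] key by force
    have "(?X ^\<^sub>m 2 * ?Y + ?X * ?Y * ?X + ?Y * ?X ^\<^sub>m 2) $$ (j,k)
        = (?X * ?X * ?Y) $$ (j,k) + (?X * ?Y * ?X) $$ (j,k) + (?Y * ?X * ?X) $$ (j,k)"
      using j k X Y unfolding sq by (simp add: assoc_mult_mat[OF Y X X])
    also have "\<dots> = c1" unfolding c1_def x_def y_def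
      unfolding triple[OF X X Y j k] triple[OF X Y X j k] triple[OF Y X X j k]
      by (simp add: sum.distrib add_ac)
    finally show "(?X ^\<^sub>m 2 * ?Y + ?X * ?Y * ?X + ?Y * ?X ^\<^sub>m 2) $$ (j,k) = (sqnorm q s \<cdot>\<^sub>m ?Y) $$ (j,k)"
      using c1 j k unfolding y_def by simp
  qed (use X Y in auto)
qed

theorem lemma3p1:
  fixes p q :: nat and A :: "nat \<Rightarrow> real mat"
  assumes "p \<ge> 1" and "q \<ge> 2"
    and carr: "\<And>i. i < q \<Longrightarrow> A i \<in> carrier_mat p p"
    and sym: "\<And>i. i < q \<Longrightarrow> transpose_mat (A i) = A i"
    and cube: "\<And>\<eta>. Aeta p q A \<eta> ^\<^sub>m 3 = sqnorm q \<eta> \<cdot>\<^sub>m Aeta p q A \<eta>"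
  shows "(\<exists>\<nu> \<mu> :: nat. 2 * \<nu> + \<mu> = p \<and>
            (\<forall>\<eta>. (\<exists>i<q. \<eta> i \<noteq> 0) \<longrightarrow>
               (let M = (1 / sqrt (sqnorm q \<eta>)) \<cdot>\<^sub>m Aeta p q A \<eta> in
                 eig_mult M 1 = \<nu> \<and> eig_mult M (-1) = \<nu> \<and> eig_mult M 0 = \<mu>)) \<and>
            (\<forall>i<q. eig_mult (A i) 1 = \<nu> \<and> eig_mult (A i) (-1) = \<nu> \<and> eig_mult (A i) 0 = \<mu>))
       \<and> (\<forall>i<q. mat_trace (A i) = 0)
       \<and> (\<forall>i<q. A i ^\<^sub>m 3 = A i)
       \<and> (\<forall>s t. inner_q q s t = 0 \<longrightarrow>
            Aeta p q A s ^\<^sub>m 2 * Aeta p q A t + Aeta p q A s * Aeta p q A t * Aeta p q A s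
              + Aeta p q A t * Aeta p q A s ^\<^sub>m 2 = sqnorm q s \<cdot>\<^sub>m Aeta p q A t)"
proof -
  define e :: "nat \<Rightarrow> nat \<Rightarrow> real" where "e k = (\<lambda>i. if i = k then 1 else 0)" for k
  have eS: "\<exists>i<q. e k i \<noteq> 0" if "k < q" for k using that by (auto simp: e_def)
  have sq_e: "sqnorm q (e k) = 1" if "k < q" for k
    using that unfolding sqnorm_def e_def
    by (subst sum.cong[OF refl, of _ _ "\<lambda>i. if i = k then 1 else 0"]) auto
  have Ae: "Aeta p q A (e k) = A k" if k: "k < q" for k
  proof (rule eq_matI)
    fix j l assume "j < dim_row (A k)" "l < dim_col (A k)"
    then show "Aeta p q A (e k) $$ (j, l) = A k $$ (j, l)"
      using carr[OF k] k unfolding e_def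
      by (simp add: Aeta_index, subst sum.cong[OF refl, of _ _ "\<lambda>i. if i = k then A k $$ (j, l) else 0"]) auto
  qed (use carr[OF k] in auto)
  have one_smult: "(1::real) \<cdot>\<^sub>m X = X" for X :: "real mat" by (rule eq_matI) auto
  have Me: "(1 / sqrt (sqnorm q (e k))) \<cdot>\<^sub>m Aeta p q A (e k) = A k" if "k < q" for k
    using that by (simp add: sq_e Ae one_smult)
  have q0: "0 < q" using assms(2) by simp
  obtain a0 b0 c0 where abc0: "eig_mult ((1 / sqrt (sqnorm q (e 0))) \<cdot>\<^sub>m Aeta p q A (e 0)) 1 = a0"
    "eig_mult ((1 / sqrt (sqnorm q (e 0))) \<cdot>\<^sub>m Aeta p q A (e 0)) (-1) = b0"
    "eig_mult ((1 / sqrt (sqnorm q (e 0))) \<cdot>\<^sub>m Aeta p q A (e 0)) 0 = c0"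
    "a0 + b0 + c0 = p" "T1 p q A (e 0) = real a0 - real b0" "T2 p q A (e 0) = real a0 + real b0"
    using info[OF cube eS[OF q0]] by blast
  have "a0 = b0" using abc0(5) T1_zero[OF cube assms(2) eS[OF q0]] by simp
  have gen: "eig_mult ((1 / sqrt (sqnorm q \<eta>)) \<cdot>\<^sub>m Aeta p q A \<eta>) 1 = a0
      \<and> eig_mult ((1 / sqrt (sqnorm q \<eta>)) \<cdot>\<^sub>m Aeta p q A \<eta>) (-1) = a0
      \<and> eig_mult ((1 / sqrt (sqnorm q \<eta>)) \<cdot>\<^sub>m Aeta p q A \<eta>) 0 = c0" if nz: "\<exists>i<q. \<eta> i \<noteq> 0" for \<eta>
  proof -
    obtain a b c where abc: "eig_mult ((1 / sqrt (sqnorm q \<eta>)) \<cdot>\<^sub>m Aeta p q A \<eta>) 1 = a"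
      "eig_mult ((1 / sqrt (sqnorm q \<eta>)) \<cdot>\<^sub>m Aeta p q A \<eta>) (-1) = b"
      "eig_mult ((1 / sqrt (sqnorm q \<eta>)) \<cdot>\<^sub>m Aeta p q A \<eta>) 0 = c"
      "a + b + c = p" "T1 p q A \<eta> = real a - real b" "T2 p q A \<eta> = real a + real b"
      using info[OF cube nz] by blast
    have "a = b" using abc(5) T1_zero[OF cube assms(2) nz] by simp
    moreover have "real a + real b = real a0 + real b0"
      using abc(6) abc0(6) T2_const[OF cube nz eS[OF q0]] by simp
    ultimately have "a = a0" using \<open>a0 = b0\<close> by simp
    then show ?thesis using abc \<open>a = b\<close> abc0(4) \<open>a0 = b0\<close> by simp
  qed
  have part1: "\<exists>\<nu> \<mu> :: nat. 2 * \<nu> + \<mu> = p \<and>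
            (\<forall>\<eta>. (\<exists>i<q. \<eta> i \<noteq> 0) \<longrightarrow>
               (let M = (1 / sqrt (sqnorm q \<eta>)) \<cdot>\<^sub>m Aeta p q A \<eta> in
                 eig_mult M 1 = \<nu> \<and> eig_mult M (-1) = \<nu> \<and> eig_mult M 0 = \<mu>)) \<and>
            (\<forall>i<q. eig_mult (A i) 1 = \<nu> \<and> eig_mult (A i) (-1) = \<nu> \<and> eig_mult (A i) 0 = \<mu>)"
  proof (intro exI conjI allI impI)
    show "2 * a0 + c0 = p" using abc0(4) \<open>a0 = b0\<close> by simp
  next
    fix \<eta> :: "nat \<Rightarrow> real" assume "\<exists>i<q. \<eta> i \<noteq> 0"
    then show "let M = (1 / sqrt (sqnorm q \<eta>)) \<cdot>\<^sub>m Aeta p q A \<eta> in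
                 eig_mult M 1 = a0 \<and> eig_mult M (-1) = a0 \<and> eig_mult M 0 = c0"
      using gen unfolding Let_def by blast
  next
    fix i assume i: "i < q"
    have "eig_mult (A i) 1 = a0 \<and> eig_mult (A i) (-1) = a0 \<and> eig_mult (A i) 0 = c0"
      using gen[OF eS[OF i]] unfolding Me[OF i] .
    then show "eig_mult (A i) 1 = a0" "eig_mult (A i) (-1) = a0" "eig_mult (A i) 0 = c0" by auto
  qed
  have part2: "\<forall>i<q. mat_trace (A i) = 0"
  proof (intro allI impI)
    fix i assume i: "i < q"
    have "T1 p q A (e i) = 0" by (rule T1_zero[OF cube assms(2) eS[OF i]])
    then show "mat_trace (A i) = 0" unfolding T1_def using sq_e[OF i] Ae[OF i] by simp
  qed
  have part3: "\<forall>i<q. A i ^\<^sub>m 3 = A i"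
  proof (intro allI impI)
    fix i assume i: "i < q"
    show "A i ^\<^sub>m 3 = A i" using cube[of "e i"] sq_e[OF i] Ae[OF i] one_smult by simp
  qed
  have part4: "\<forall>s t. inner_q q s t = 0 \<longrightarrow>
            Aeta p q A s ^\<^sub>m 2 * Aeta p q A t + Aeta p q A s * Aeta p q A t * Aeta p q A s
              + Aeta p q A t * Aeta p q A s ^\<^sub>m 2 = sqnorm q s \<cdot>\<^sub>m Aeta p q A t"
    using polar[OF cube] by blast
  show ?thesis using part1 part2 part3 part4 by blast
qed

end
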